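(* Let $\mathcal{X},\mathcal{Y}$ be finite, $P_{\bar X}$ an $m$-type on $\mathcal{X}$, $P_{Y|X}$ a channel, $P_{\bar XY}=P_{\bar X}P_{Y|X}$ with output $P_Y$, and $R>I(P_{\bar X},P_{Y|X})>0$. For a channel $Q_{Y|X}$ write $Q_Y=\sum_xP_{\bar X}(x)Q_{Y|X}(\cdot|x)$ and define \[ \aleph(R,P_{\bar X},P_{Y|X})=\min_{Q_{Y|X}}\Big\{D(P_{\bar X}Q_{Y|X}\|P_{\bar XY})+\tfrac12\big[R-D(P_{\bar X}Q_{Y|X}\|P_{\bar X}Q_Y)\big]_+\Big\}, \] \[ \beth(R,P_{\bar X},P_{Y|X})=\min_{Q_{Y|X}}\Big\{D(P_{\bar X}Q_{Y|X}\|P_{\bar XY})+\big[R-G(Q_{Y|X}\|P_{Y|X}|P_{\bar X})\big]_+\Big\}, \] where, with $(\bar X,\widetilde Y)\sim P_{\bar X}Q_{Y|X}$, \[ G(Q_{Y|X}\|P_{Y|X}|P_{\bar X})=H(Q_Y)-\mathbb{E}\big[\imath_{P_{Y|X}}(\widetilde Y|\bar X)\big]+\min_{R_{Y|X}:\ \sum_xP_{\bar X}(x)R_{Y|X}(\cdot|x)=Q_Y}D(P_{\bar X}R_{Y|X}\|P_{\bar XY}). \] Then $\aleph(R,P_{\bar X},P_{Y|X})\ge\frac12\beth(R,P_{\bar X},P_{Y|X})$.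
   Context: All minima over $Q_{Y|X}$, $R_{Y|X}$ range over channels from $\mathcal{X}$ to $\mathcal{Y}$. $[f]_+=\max\{0,f\}$, $D$ is relative entropy, $H$ is entropy, $\imath_{P_{Y|X}}(y|x)=\log\frac1{P_{Y|X}(y|x)}$. An $m$-type is a distribution with probabilities in $\{0,1/m,\dots,1\}$. *)

theory Defs
  imports Complex_Main "HOL-Library.Extended_Real"
begin

definition is_dist :: "('a::finite \<Rightarrow> real) \<Rightarrow> bool" where
  "is_dist P \<longleftrightarrow> (\<forall>a. P a \<ge> 0) \<and> sum P UNIV = 1"

definition is_channel :: "('x::finite \<Rightarrow> 'y::finite \<Rightarrow> real) \<Rightarrow> bool" where
  "is_channel W \<longleftrightarrow> (\<forall>x. is_dist (W x))"

definition is_mtype :: "nat \<Rightarrow> ('a::finite \<Rightarrow> real) \<Rightarrow> bool" where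
  "is_mtype m P \<longleftrightarrow> m > 0 \<and> is_dist P \<and> (\<forall>a. \<exists>k::nat. P a = real k / real m)"

definition relent :: "('a::finite \<Rightarrow> real) \<Rightarrow> ('a \<Rightarrow> real) \<Rightarrow> ereal" where
  "relent P Q = (if \<forall>a. P a > 0 \<longrightarrow> Q a > 0
      then ereal (\<Sum>a | P a > 0. P a * ln (P a / Q a)) else \<infinity>)"

definition entropy :: "('a::finite \<Rightarrow> real) \<Rightarrow> real" where
  "entropy P = - (\<Sum>a | P a > 0. P a * ln (P a))"

definition joint :: "('x::finite \<Rightarrow> real) \<Rightarrow> ('x \<Rightarrow> 'y::finite \<Rightarrow> real) \<Rightarrow> ('x \<times> 'y \<Rightarrow> real)" where
  "joint PX W = (\<lambda>(x,y). PX x * W x y)"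

definition outdist :: "('x::finite \<Rightarrow> real) \<Rightarrow> ('x \<Rightarrow> 'y::finite \<Rightarrow> real) \<Rightarrow> ('y \<Rightarrow> real)" where
  "outdist PX W = (\<lambda>y. \<Sum>x\<in>UNIV. PX x * W x y)"

definition proddist :: "('x::finite \<Rightarrow> real) \<Rightarrow> ('y::finite \<Rightarrow> real) \<Rightarrow> ('x \<times> 'y \<Rightarrow> real)" where
  "proddist PX PY = (\<lambda>(x,y). PX x * PY y)"

definition mutinf :: "('x::finite \<Rightarrow> real) \<Rightarrow> ('x \<Rightarrow> 'y::finite \<Rightarrow> real) \<Rightarrow> ereal" where
  "mutinf PX W = relent (joint PX W) (proddist PX (outdist PX W))"

text \<open>E[ i_P(Y~|X)] with (X,Y~) ~ P_X Q; +\<infinity> if Q puts mass where P vanishes.\<close>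
definition cross_info :: "('x::finite \<Rightarrow> real) \<Rightarrow> ('x \<Rightarrow> 'y::finite \<Rightarrow> real) \<Rightarrow> ('x \<Rightarrow> 'y \<Rightarrow> real) \<Rightarrow> ereal" where
  "cross_info PX Q P = (if \<forall>x y. PX x * Q x y > 0 \<longrightarrow> P x y > 0
      then ereal (\<Sum>(x,y) | PX x * Q x y > 0. PX x * Q x y * ln (1 / P x y)) else \<infinity>)"

definition posp :: "ereal \<Rightarrow> ereal" where
  "posp f = max 0 f"

definition Gfun :: "('x::finite \<Rightarrow> 'y::finite \<Rightarrow> real) \<Rightarrow> ('x \<Rightarrow> 'y \<Rightarrow> real) \<Rightarrow> ('x \<Rightarrow> real) \<Rightarrow> ereal" where
  "Gfun Q P PX = ereal (entropy (outdist PX Q)) - cross_info PX Q P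
     + (INF R \<in> {R. is_channel R \<and> outdist PX R = outdist PX Q}. relent (joint PX R) (joint PX P))"

definition aleph :: "real \<Rightarrow> ('x::finite \<Rightarrow> real) \<Rightarrow> ('x \<Rightarrow> 'y::finite \<Rightarrow> real) \<Rightarrow> ereal" where
  "aleph R PX P = (INF Q \<in> {Q. is_channel Q}.
      relent (joint PX Q) (joint PX P)
      + ereal (1/2) * posp (ereal R - relent (joint PX Q) (proddist PX (outdist PX Q))))"

definition beth :: "real \<Rightarrow> ('x::finite \<Rightarrow> real) \<Rightarrow> ('x \<Rightarrow> 'y::finite \<Rightarrow> real) \<Rightarrow> ereal" where
  "beth R PX P = (INF Q \<in> {Q. is_channel Q}.
      relent (joint PX Q) (joint PX P) + posp (ereal R - Gfun Q P PX))"

end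

theory Submission imports Defs begin

lemma sum_pair: "sum f (UNIV::('a::finite\<times>'b::finite) set) = (\<Sum>x\<in>UNIV. \<Sum>y\<in>UNIV. f (x,y))"
  by (simp add: sum.cartesian_product UNIV_Times_UNIV[symmetric] del: UNIV_Times_UNIV)

lemma sum_pos_UNIV: "sum f {a::'a::finite. g a > (0::real)} = (\<Sum>a\<in>UNIV. if g a > 0 then f a else 0)"
  by (simp add: sum.inter_filter[symmetric])

lemma gibbs:
  fixes P Q :: "'a::finite \<Rightarrow> real"
  assumes "is_dist P" "\<And>a. Q a \<ge> 0" "sum Q UNIV \<le> 1"
  shows "relent P Q \<ge> 0"
proof (cases "\<forall>a. P a > 0 \<longrightarrow> Q a > 0")
  case False thus ?thesis unfolding relent_def by auto
next
  case True
  have t: "P a * ln (P a / Q a) \<ge> P a - Q a" if "P a > 0" for a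
  proof -
    have q: "Q a > 0" using True that by blast
    have "ln (Q a / P a) \<le> Q a / P a - 1" using q that by (intro ln_le_minus_one) simp
    moreover have "ln (P a / Q a) = - ln (Q a / P a)" using q that by (simp add: ln_div)
    ultimately have "ln (P a / Q a) \<ge> 1 - Q a / P a" by simp
    hence "P a * ln (P a / Q a) \<ge> P a * (1 - Q a / P a)" using that by (simp add: mult_left_mono)
    thus ?thesis using that by (simp add: algebra_simps)
  qed
  have "(\<Sum>a | P a > 0. P a * ln (P a / Q a)) \<ge> (\<Sum>a | P a > 0. P a - Q a)"
    by (rule sum_mono) (use t in auto)
  also have "(\<Sum>a | P a > 0. P a - Q a) = (\<Sum>a | P a > 0. P a) - (\<Sum>a | P a > 0. Q a)"
    by (simp add: sum_subtractf)
  also have "(\<Sum>a | P a > 0. P a) = 1"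
  proof -
    have "(\<Sum>a | P a > 0. P a) = (\<Sum>a\<in>UNIV. if P a > 0 then P a else 0)" by (rule sum_pos_UNIV)
    also have "\<dots> = sum P UNIV" using assms(1) unfolding is_dist_def
      by (intro sum.cong) (auto simp: order.order_iff_strict)
    finally show ?thesis using assms(1) by (simp add: is_dist_def)
  qed
  finally have A: "(\<Sum>a | P a > 0. P a * ln (P a / Q a)) \<ge> 1 - (\<Sum>a | P a > 0. Q a)" .
  have "(\<Sum>a | P a > 0. Q a) \<le> sum Q UNIV" by (rule sum_mono2) (auto simp: assms(2))
  hence "(\<Sum>a | P a > 0. P a * ln (P a / Q a)) \<ge> 0" using assms(3) A by linarith
  thus ?thesis using True by (simp add: relent_def)
qed

lemma joint_nonneg: "is_dist PX \<Longrightarrow> is_channel W \<Longrightarrow> joint PX W a \<ge> 0"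
  by (cases a) (simp add: joint_def is_dist_def is_channel_def)

lemma joint_sum: "is_dist PX \<Longrightarrow> is_channel W \<Longrightarrow> sum (joint PX W) UNIV = 1"
  by (simp add: sum_pair joint_def is_dist_def is_channel_def sum_distrib_left[symmetric])

lemma joint_dist: "is_dist PX \<Longrightarrow> is_channel W \<Longrightarrow> is_dist (joint PX W)"
  using joint_nonneg joint_sum unfolding is_dist_def by blast

lemma relent_joint_nonneg: "is_dist PX \<Longrightarrow> is_channel W \<Longrightarrow> is_channel V \<Longrightarrow>
   relent (joint PX W) (joint PX V) \<ge> 0"
  by (intro gibbs joint_dist) (auto simp: joint_nonneg joint_sum)

lemma half_posp_nonneg: "ereal (1/2) * posp z \<ge> 0"
  by (simp add: posp_def)

lemma identity:
  fixes PX :: "'x::finite \<Rightarrow> real" and P Q :: "'x \<Rightarrow> 'y::finite \<Rightarrow> real"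
  assumes dPX: "is_dist PX" and chP: "is_channel P" and chQ: "is_channel Q"
    and C: "\<forall>a. joint PX Q a > 0 \<longrightarrow> joint PX P a > 0"
  shows "\<exists>c i. cross_info PX Q P = ereal c
     \<and> relent (joint PX Q) (proddist PX (outdist PX Q)) = ereal i
     \<and> relent (joint PX Q) (joint PX P) = ereal (i - entropy (outdist PX Q) + c)"
proof -
  define J where "J = joint PX Q"
  define QY where "QY = outdist PX Q"
  have pos: "PX x > 0 \<and> Q x y > 0 \<and> P x y > 0 \<and> QY y > 0" if "PX x * Q x y > 0" for x y
  proof -
    have nn: "PX x \<ge> 0" "Q x y \<ge> 0" "P x y \<ge> 0" using dPX chP chQ by (auto simp: is_dist_def is_channel_def)
    have "PX x * P x y > 0" using C that by (auto simp: joint_def)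
    hence "P x y > 0" using nn by (simp add: zero_less_mult_iff)
    moreover have "PX x > 0" "Q x y > 0" using that nn by (auto simp: zero_less_mult_iff)
    moreover have "QY y \<ge> PX x * Q x y" unfolding QY_def outdist_def
      by (rule member_le_sum[where f="\<lambda>x. PX x * Q x y"]) (use dPX chQ in \<open>auto simp: is_dist_def is_channel_def\<close>)
    moreover note that
    ultimately show ?thesis by (smt (verit))
  qed
  define c where "c = (\<Sum>(x,y) | PX x * Q x y > 0. PX x * Q x y * ln (1 / P x y))"
  define i where "i = (\<Sum>a | J a > 0. J a * ln (J a / proddist PX QY a))"
  define d where "d = (\<Sum>a | J a > 0. J a * ln (J a / joint PX P a))"
  have ci: "cross_info PX Q P = ereal c" unfolding cross_info_def c_def using pos by auto
  have ii: "relent (joint PX Q) (proddist PX (outdist PX Q)) = ereal i"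
    unfolding relent_def i_def J_def[symmetric] QY_def[symmetric]
    using pos by (auto simp: J_def joint_def proddist_def)
  have dd: "relent (joint PX Q) (joint PX P) = ereal d"
    unfolding relent_def d_def J_def[symmetric] using C by (auto simp: J_def)
  have QYnn: "QY y \<ge> 0" for y unfolding QY_def outdist_def using dPX chQ
    by (auto simp: is_dist_def is_channel_def intro!: sum_nonneg)
  have Jnn: "J a \<ge> 0" for a unfolding J_def using dPX chQ by (rule joint_nonneg)
  have cU: "c = (\<Sum>a\<in>UNIV. if J a > 0 then J a * ln (1 / P (fst a) (snd a)) else 0)"
  proof -
    have "{(x,y). PX x * Q x y > 0} = {a. J a > 0}" by (auto simp: J_def joint_def)
    hence "c = (\<Sum>a | J a > 0. J a * ln (1 / P (fst a) (snd a)))"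
      unfolding c_def by (auto simp: J_def joint_def case_prod_beta intro!: sum.cong)
    thus ?thesis by (simp add: sum_pos_UNIV)
  qed
  have "i - d + c = (\<Sum>a\<in>UNIV. if J a > 0 then J a * ln (J a / proddist PX QY a)
        - J a * ln (J a / joint PX P a) + J a * ln (1 / P (fst a) (snd a)) else 0)"
    unfolding i_def d_def cU sum_pos_UNIV[where g=J]
    by (simp add: sum_subtractf[symmetric] sum.distrib[symmetric] if_distrib cong: if_cong)
  also have "\<dots> = (\<Sum>a\<in>UNIV. - (J a * ln (QY (snd a))))"
  proof (rule sum.cong)
    fix a :: "'x \<times> 'y" 
    obtain x y where a: "a = (x,y)" by (cases a)
    show "(if J a > 0 then J a * ln (J a / proddist PX QY a)
        - J a * ln (J a / joint PX P a) + J a * ln (1 / P (fst a) (snd a)) else 0) = - (J a * ln (QY (snd a)))"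
    proof (cases "J a > 0")
      case True
      hence p: "PX x > 0" "Q x y > 0" "P x y > 0" "QY y > 0" using pos[of x y] by (auto simp: a J_def joint_def)
      show ?thesis using True p by (simp add: a J_def joint_def proddist_def ln_div ln_mult algebra_simps)
    next
      case False
      hence "J a = 0" using Jnn[of a] by simp
      thus ?thesis by simp
    qed
  qed simp
  also have "\<dots> = - (\<Sum>y\<in>UNIV. QY y * ln (QY y))"
    by (simp add: sum_pair sum_negf J_def joint_def QY_def outdist_def sum_distrib_right[symmetric]
        sum.swap[where A=UNIV and B=UNIV])
  also have "\<dots> = entropy QY"
  proof -
    have "(\<Sum>y\<in>UNIV. QY y * ln (QY y)) = (\<Sum>y | QY y > 0. QY y * ln (QY y))"
      using QYnn by (simp add: sum_pos_UNIV) (intro sum.cong; auto simp: order.order_iff_strict)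
    thus ?thesis by (simp add: entropy_def)
  qed
  finally have "d = i - entropy QY + c" by simp
  thus ?thesis using ci ii dd QY_def by blast
qed


lemma key:
  fixes PX :: "'x::finite \<Rightarrow> real" and P Q :: "'x \<Rightarrow> 'y::finite \<Rightarrow> real"
  assumes dPX: "is_dist PX" and chP: "is_channel P" and chQ: "is_channel Q"
  shows "ereal (1/2) * (relent (joint PX Q) (joint PX P) + posp (ereal R - Gfun Q P PX))
    \<le> relent (joint PX Q) (joint PX P) + ereal (1/2) * posp (ereal R - relent (joint PX Q) (proddist PX (outdist PX Q)))"
proof (cases "\<forall>a. joint PX Q a > 0 \<longrightarrow> joint PX P a > 0")
  case False
  hence "relent (joint PX Q) (joint PX P) = \<infinity>"
    unfolding relent_def by auto
  moreover have "ereal (1/2) * posp (ereal R - relent (joint PX Q) (proddist PX (outdist PX Q))) \<noteq> -\<infinity>"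
    using half_posp_nonneg by (metis MInfty_neq_ereal(1) ereal_infty_less_eq(2) zero_ereal_def)
  ultimately show ?thesis by simp
next
  case True
  obtain c i where ci: "cross_info PX Q P = ereal c"
    and ii: "relent (joint PX Q) (proddist PX (outdist PX Q)) = ereal i"
    and dd: "relent (joint PX Q) (joint PX P) = ereal (i - entropy (outdist PX Q) + c)"
    using identity[OF dPX chP chQ True] by blast
  define d where "d = i - entropy (outdist PX Q) + c"
  have d0: "d \<ge> 0" using relent_joint_nonneg[OF dPX chQ chP] dd d_def by simp
  have INF0: "(INF R \<in> {R. is_channel R \<and> outdist PX R = outdist PX Q}. relent (joint PX R) (joint PX P)) \<ge> 0"
    by (rule INF_greatest) (use relent_joint_nonneg[OF dPX _ chP] in auto)
  have G: "Gfun Q P PX \<ge> ereal (i - d)"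
    unfolding Gfun_def ci d_def by (rule add_increasing2[OF INF0]) simp
  have "ereal R - Gfun Q P PX \<le> ereal R - ereal (i - d)"
    by (rule ereal_minus_mono[OF order.refl G])
  also have "ereal R - ereal (i - d) = ereal (R - i + d)" by simp
  finally have GG: "ereal R - Gfun Q P PX \<le> ereal (R - i + d)" .
  have "max 0 (ereal R - Gfun Q P PX) \<le> max 0 (ereal (R - i + d))"
    using GG by (rule max.mono[OF order.refl])
  also have "max 0 (ereal (R - i + d)) = ereal (max 0 (R - i + d))" by (simp add: max_def)
  finally have "posp (ereal R - Gfun Q P PX) \<le> ereal (max 0 (R - i + d))"
    unfolding posp_def .
  hence "ereal (1/2) * (relent (joint PX Q) (joint PX P) + posp (ereal R - Gfun Q P PX))
      \<le> ereal (1/2) * (ereal d + ereal (max 0 (R - i + d)))"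
    unfolding dd d_def[symmetric] by (intro ereal_mult_left_mono add_left_mono) auto
  also have "\<dots> = ereal ((d + max 0 (R - i + d)) / 2)" by (simp only: plus_ereal.simps times_ereal.simps) simp
  also have "\<dots> \<le> ereal (d + max 0 (R - i) / 2)" using d0 by (simp add: max_def)
  also have "\<dots> = relent (joint PX Q) (joint PX P) + ereal (1/2) * posp (ereal R - relent (joint PX Q) (proddist PX (outdist PX Q)))"
    unfolding dd d_def[symmetric] ii posp_def by (simp add: max_def zero_ereal_def)
  finally show ?thesis .
qed

theorem proposition4:
  fixes PX :: "'x::finite \<Rightarrow> real" and P :: "'x \<Rightarrow> 'y::finite \<Rightarrow> real"
    and m :: nat and R :: real
  assumes "is_mtype m PX"
    and "is_channel P"
    and "ereal R > mutinf PX P"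
    and "mutinf PX P > 0"
  shows "aleph R PX P \<ge> ereal (1/2) * beth R PX P"
  unfolding aleph_def
proof (rule INF_greatest)
  fix Q :: "'x \<Rightarrow> 'y \<Rightarrow> real" assume "Q \<in> {Q. is_channel Q}"
  hence chQ: "is_channel Q" by simp
  have dPX: "is_dist PX" using assms(1) by (simp add: is_mtype_def)
  have "ereal (1/2) * beth R PX P \<le> ereal (1/2) * (relent (joint PX Q) (joint PX P) + posp (ereal R - Gfun Q P PX))"
    unfolding beth_def by (intro ereal_mult_left_mono INF_lower) (use chQ in auto)
  also have "\<dots> \<le> relent (joint PX Q) (joint PX P) + ereal (1/2) * posp (ereal R - relent (joint PX Q) (proddist PX (outdist PX Q)))"
    by (rule key[OF dPX assms(2) chQ])
  finally show "ereal (1/2) * beth R PX P \<le> relent (joint PX Q) (joint PX P) + ereal (1/2) * posp (ereal R - relent (joint PX Q) (proddist PX (outdist PX Q)))" .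
qed

end
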